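(* Let $F:\mathbb{R}^n\rightrightarrows\mathbb{R}^n$ be continuous with $F(x)$ nonempty, compact and convex for all $x$, and assume $\Sigma:\dot x\in F(x)$ is forward complete. Let $X_o\subset\mathbb{R}^n$, let $\bar\epsilon:\mathbb{R}^n\to\mathbb{R}_{>0}$ be continuous, and let $K_{\bar\epsilon}$ be the reachable set defined below. Then for each continuous $\epsilon:\mathbb{R}^n\to\mathbb{R}_{\ge0}$ with $\epsilon(x)<\bar\epsilon(x)$ for all $x\in\mathbb{R}^n$: (P1) $\mathrm{cl}(K_{\bar\epsilon})$ is forward contractive for $\Sigma_\epsilon$; (P2) $\mathbb{R}^n\setminus\mathrm{int}(K_{\bar\epsilon})$ is forward contractive for $\Sigma^-_\epsilon$; (P3) solutions of $\Sigma_\epsilon$ starting in $\mathrm{int}(K_{\bar\epsilon})$ never reach $\partial K_{\bar\epsilon}$ at positive times; (P4) solutions of $\Sigma_\epsilon$ starting in $\mathbb{R}^n\setminus\mathrm{cl}(K_{\bar\epsilon})$ never reach $\partial K_{\bar\epsilon}$ at negative times.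
   Context: $\mathbb{B}$ is the closed unit ball. Continuity of a set-valued map means upper and lower semicontinuity. Solutions of a differential inclusion are locally absolutely continuous functions on an interval containing $0$ (possibly including negative times) satisfying the inclusion a.e.; maximal solutions are non-extendable; $\mathcal{S}_{\Sigma'}(x)$ is the set of maximal solutions of $\Sigma'$ with $\phi(0)=x$. Forward complete: every maximal solution is defined on an interval unbounded to the right. $\Sigma_\epsilon$: $\dot x\in F(x)+\epsilon(x)\mathbb{B}$; $\Sigma^-_\epsilon$: $\dot x\in -F(x)+\epsilon(x)\mathbb{B}$. For $t\ge0$, $R_{\Sigma'}(t,x):=\{\phi(s):\phi\in\mathcal{S}_{\Sigma'}(x),\ s\in\mathrm{dom}\,\phi\cap[0,t]\}$. $K_{\bar\epsilon}:=\bigcup_{t\ge0}\bigcup_{x\in X_o}R_{\Sigma_{\bar\epsilon}}(t,x)$. A closed set $K$ is forward invariant for $\Sigma'$ if every solution starting in $K$ stays in $K$; it is forward contractive if it is forward invariant and for every $x_o\in\partial K$ and $\phi\in\mathcal{S}_{\Sigma'}(x_o)$ there is $T>0$ with $\phi(t)\in\mathrm{int}(K)$ for all $t\in\mathrm{dom}\,\phi\cap(0,T]$. *)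

theory Defs
  imports "HOL-Analysis.Analysis"
begin

definition usc_at :: "('a::metric_space \<Rightarrow> 'b::topological_space set) \<Rightarrow> 'a \<Rightarrow> bool" where
  "usc_at F x \<longleftrightarrow> (\<forall>U. open U \<and> F x \<subseteq> U \<longrightarrow> (\<exists>\<delta>>0. \<forall>y\<in>ball x \<delta>. F y \<subseteq> U))"

definition lsc_at :: "('a::metric_space \<Rightarrow> 'b::topological_space set) \<Rightarrow> 'a \<Rightarrow> bool" where
  "lsc_at F x \<longleftrightarrow> (\<forall>U. open U \<and> F x \<inter> U \<noteq> {} \<longrightarrow> (\<exists>\<delta>>0. \<forall>y\<in>ball x \<delta>. F y \<inter> U \<noteq> {}))"

definition sv_continuous :: "('a::metric_space \<Rightarrow> 'b::topological_space set) \<Rightarrow> bool" where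
  "sv_continuous F \<longleftrightarrow> (\<forall>x. usc_at F x \<and> lsc_at F x)"

definition abs_cont_on :: "real set \<Rightarrow> (real \<Rightarrow> 'a::real_normed_vector) \<Rightarrow> bool" where
  "abs_cont_on S f \<longleftrightarrow>
     (\<forall>\<epsilon>>0. \<exists>\<delta>>0. \<forall>(n::nat) a b.
        (\<forall>k<n. a k \<le> b k \<and> a k \<in> S \<and> b k \<in> S) \<and>
        (\<forall>j<n. \<forall>k<n. j \<noteq> k \<longrightarrow> {a j<..<b j} \<inter> {a k<..<b k} = {}) \<and>
        (\<Sum>k<n. b k - a k) < \<delta>
        \<longrightarrow> (\<Sum>k<n. norm (f (b k) - f (a k))) < \<epsilon>)"

definition loc_abs_cont_on :: "real set \<Rightarrow> (real \<Rightarrow> 'a::real_normed_vector) \<Rightarrow> bool" where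
  "loc_abs_cont_on I f \<longleftrightarrow> (\<forall>a b. {a..b} \<subseteq> I \<longrightarrow> abs_cont_on {a..b} f)"

definition is_sol :: "('a::euclidean_space \<Rightarrow> 'a set) \<Rightarrow> real set \<Rightarrow> (real \<Rightarrow> 'a) \<Rightarrow> bool" where
  "is_sol G I \<phi> \<longleftrightarrow> is_interval I \<and> 0 \<in> I \<and> loc_abs_cont_on I \<phi> \<and>
     (\<exists>N. N \<in> null_sets lebesgue \<and>
        (\<forall>t\<in>I - N. \<exists>v. (\<phi> has_vector_derivative v) (at t within I) \<and> v \<in> G (\<phi> t)))"

definition is_max_sol :: "('a::euclidean_space \<Rightarrow> 'a set) \<Rightarrow> real set \<Rightarrow> (real \<Rightarrow> 'a) \<Rightarrow> bool" where
  "is_max_sol G I \<phi> \<longleftrightarrow> is_sol G I \<phi> \<and>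
     \<not> (\<exists>J \<psi>. is_sol G J \<psi> \<and> I \<subset> J \<and> (\<forall>t\<in>I. \<psi> t = \<phi> t))"

definition Sols :: "('a::euclidean_space \<Rightarrow> 'a set) \<Rightarrow> 'a \<Rightarrow> (real set \<times> (real \<Rightarrow> 'a)) set" where
  "Sols G x = {(I, \<phi>). is_max_sol G I \<phi> \<and> \<phi> 0 = x}"

definition forward_complete :: "('a::euclidean_space \<Rightarrow> 'a set) \<Rightarrow> bool" where
  "forward_complete G \<longleftrightarrow> (\<forall>x. \<forall>(I, \<phi>) \<in> Sols G x. \<not> bdd_above I)"

definition infl :: "('a::euclidean_space \<Rightarrow> 'a set) \<Rightarrow> ('a \<Rightarrow> real) \<Rightarrow> 'a \<Rightarrow> 'a set" where
  "infl F e x = {v + w | v w. v \<in> F x \<and> norm w \<le> e x}"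

definition infl_neg :: "('a::euclidean_space \<Rightarrow> 'a set) \<Rightarrow> ('a \<Rightarrow> real) \<Rightarrow> 'a \<Rightarrow> 'a set" where
  "infl_neg F e x = {- v + w | v w. v \<in> F x \<and> norm w \<le> e x}"

definition Reach :: "('a::euclidean_space \<Rightarrow> 'a set) \<Rightarrow> real \<Rightarrow> 'a \<Rightarrow> 'a set" where
  "Reach G t x = {\<phi> s | I \<phi> s. (I, \<phi>) \<in> Sols G x \<and> s \<in> I \<inter> {0..t}}"

definition Kset :: "('a::euclidean_space \<Rightarrow> 'a set) \<Rightarrow> ('a \<Rightarrow> real) \<Rightarrow> 'a set \<Rightarrow> 'a set" where
  "Kset F ebar Xo = (\<Union>t\<in>{0..}. \<Union>x\<in>Xo. Reach (infl F ebar) t x)"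

definition forward_invariant :: "('a::euclidean_space \<Rightarrow> 'a set) \<Rightarrow> 'a set \<Rightarrow> bool" where
  "forward_invariant G K \<longleftrightarrow> closed K \<and>
     (\<forall>I \<phi>. is_sol G I \<phi> \<and> \<phi> 0 \<in> K \<longrightarrow> (\<forall>t\<in>I. t \<ge> 0 \<longrightarrow> \<phi> t \<in> K))"

definition forward_contractive :: "('a::euclidean_space \<Rightarrow> 'a set) \<Rightarrow> 'a set \<Rightarrow> bool" where
  "forward_contractive G K \<longleftrightarrow> forward_invariant G K \<and>
     (\<forall>xo\<in>frontier K. \<forall>(I, \<phi>)\<in>Sols G xo. \<exists>T>0. \<forall>t\<in>I \<inter> {0<..T}. \<phi> t \<in> interior K)"

end

theory Submission
  imports Defs
begin

definition fam :: "real set \<Rightarrow> nat \<Rightarrow> (nat \<Rightarrow> real) \<Rightarrow> (nat \<Rightarrow> real) \<Rightarrow> real \<Rightarrow> bool" where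
  "fam S n a b d \<longleftrightarrow> (\<forall>k<n. a k \<le> b k \<and> a k \<in> S \<and> b k \<in> S) \<and>
        (\<forall>j<n. \<forall>k<n. j \<noteq> k \<longrightarrow> {a j<..<b j} \<inter> {a k<..<b k} = {}) \<and>
        (\<Sum>k<n. b k - a k) < d"

lemma ac_iff: "abs_cont_on S f \<longleftrightarrow> (\<forall>e>0. \<exists>d>0. \<forall>n a b. fam S n a b d \<longrightarrow> (\<Sum>k<n. norm (f (b k) - f (a k))) < e)"
  unfolding abs_cont_on_def fam_def by blast

lemma ac_cong:
  assumes "\<And>t. t \<in> S \<Longrightarrow> f t = g t" "abs_cont_on S f"
  shows "abs_cont_on S g"
  unfolding ac_iff
proof (intro allI impI)
  fix e :: real assume "e > 0"
  then obtain d where d: "d > 0" and H: "\<And>n a b. fam S n a b d \<Longrightarrow> (\<Sum>k<n. norm (f (b k) - f (a k))) < e"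
    using assms(2) unfolding ac_iff by blast
  show "\<exists>d>0. \<forall>n a b. fam S n a b d \<longrightarrow> (\<Sum>k<n. norm (g (b k) - g (a k))) < e"
  proof (intro exI conjI allI impI, fact d)
    fix n a b assume A: "fam S n a b d"
    have "(\<Sum>k<n. norm (g (b k) - g (a k))) = (\<Sum>k<n. norm (f (b k) - f (a k)))"
      using A assms(1) unfolding fam_def by (intro sum.cong) auto
    then show "(\<Sum>k<n. norm (g (b k) - g (a k))) < e" using H[OF A] by simp
  qed
qed

lemma ac_subset:
  assumes "T \<subseteq> S" "abs_cont_on S f"
  shows "abs_cont_on T f"
  using assms unfolding abs_cont_on_def by (meson subsetD)

lemma ac_add:
  assumes "abs_cont_on S f" "abs_cont_on S g"
  shows "abs_cont_on S (\<lambda>t. f t + g t)"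
  unfolding ac_iff
proof (intro allI impI)
  fix e :: real assume "e > 0"
  then have e2: "e/2 > 0" by simp
  obtain d1 where d1: "d1 > 0" and H1: "\<And>n a b. fam S n a b d1 \<Longrightarrow> (\<Sum>k<n. norm (f (b k) - f (a k))) < e/2"
    using assms(1) e2 unfolding ac_iff by blast
  obtain d2 where d2: "d2 > 0" and H2: "\<And>n a b. fam S n a b d2 \<Longrightarrow> (\<Sum>k<n. norm (g (b k) - g (a k))) < e/2"
    using assms(2) e2 unfolding ac_iff by blast
  show "\<exists>d>0. \<forall>n a b. fam S n a b d \<longrightarrow> (\<Sum>k<n. norm ((f (b k) + g (b k)) - (f (a k) + g (a k)))) < e"
  proof (intro exI[of _ "min d1 d2"] conjI allI impI)
    show "min d1 d2 > 0" using d1 d2 by simp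
    fix n a b assume A: "fam S n a b (min d1 d2)"
    then have A1: "fam S n a b d1" and A2: "fam S n a b d2" unfolding fam_def by auto
    have "(\<Sum>k<n. norm ((f (b k) + g (b k)) - (f (a k) + g (a k))))
        \<le> (\<Sum>k<n. norm (f (b k) - f (a k)) + norm (g (b k) - g (a k)))"
      by (intro sum_mono) (metis add_diff_add norm_triangle_ineq)
    also have "\<dots> = (\<Sum>k<n. norm (f (b k) - f (a k))) + (\<Sum>k<n. norm (g (b k) - g (a k)))"
      by (simp add: sum.distrib)
    also have "\<dots> < e/2 + e/2" using H1[OF A1] H2[OF A2] by (intro add_strict_mono) auto
    finally show "(\<Sum>k<n. norm ((f (b k) + g (b k)) - (f (a k) + g (a k)))) < e" by simp
  qed
qed

lemma ac_affine: "abs_cont_on S (\<lambda>t. t *\<^sub>R c + d)"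
  unfolding ac_iff
proof (intro allI impI)
  fix e :: real assume e: "e > 0"
  have p: "norm c + 1 > 0" by (smt (verit) norm_ge_zero)
  show "\<exists>\<delta>>0. \<forall>n a b. fam S n a b \<delta> \<longrightarrow> (\<Sum>k<n. norm ((b k *\<^sub>R c + d) - (a k *\<^sub>R c + d))) < e"
  proof (intro exI[of _ "e / (norm c + 1)"] conjI allI impI)
    show "e / (norm c + 1) > 0" using e p by simp
    fix n a b assume A: "fam S n a b (e / (norm c + 1))"
    have "(\<Sum>k<n. norm ((b k *\<^sub>R c + d) - (a k *\<^sub>R c + d))) = (\<Sum>k<n. (b k - a k) * norm c)"
      using A unfolding fam_def by (intro sum.cong) (auto simp: scaleR_diff_left[symmetric])
    also have "\<dots> = (\<Sum>k<n. b k - a k) * norm c" by (simp add: sum_distrib_right)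
    also have "\<dots> \<le> (\<Sum>k<n. b k - a k) * (norm c + 1)"
      using A unfolding fam_def by (intro mult_left_mono) (auto intro: sum_nonneg)
    also have "\<dots> < e" using A p unfolding fam_def by (simp add: pos_less_divide_eq)
    finally show "(\<Sum>k<n. norm ((b k *\<^sub>R c + d) - (a k *\<^sub>R c + d))) < e" .
  qed
qed

lemma ac_glue:
  assumes "a \<le> s" "s \<le> b" "abs_cont_on {a..s} f" "abs_cont_on {s..b} f"
  shows "abs_cont_on {a..b} f"
  unfolding ac_iff
proof (intro allI impI)
  fix e :: real assume "e > 0"
  then have e2: "e/2 > 0" by simp
  obtain d1 where d1: "d1 > 0" and H1: "\<And>n a' b'. fam {a..s} n a' b' d1 \<Longrightarrow> (\<Sum>k<n. norm (f (b' k) - f (a' k))) < e/2"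
    using assms(3) e2 unfolding ac_iff by blast
  obtain d2 where d2: "d2 > 0" and H2: "\<And>n a' b'. fam {s..b} n a' b' d2 \<Longrightarrow> (\<Sum>k<n. norm (f (b' k) - f (a' k))) < e/2"
    using assms(4) e2 unfolding ac_iff by blast
  show "\<exists>d>0. \<forall>n a' b'. fam {a..b} n a' b' d \<longrightarrow> (\<Sum>k<n. norm (f (b' k) - f (a' k))) < e"
  proof (intro exI[of _ "min d1 d2"] conjI allI impI)
    show "min d1 d2 > 0" using d1 d2 by simp
    fix n and \<alpha> \<beta> :: "nat \<Rightarrow> real" assume A: "fam {a..b} n \<alpha> \<beta> (min d1 d2)"
    define \<alpha>L where "\<alpha>L k = min (\<alpha> k) s" for k
    define \<beta>L where "\<beta>L k = min (\<beta> k) s" for k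
    define \<alpha>R where "\<alpha>R k = max (\<alpha> k) s" for k
    define \<beta>R where "\<beta>R k = max (\<beta> k) s" for k
    have lenL: "(\<Sum>k<n. \<beta>L k - \<alpha>L k) \<le> (\<Sum>k<n. \<beta> k - \<alpha> k)"
      using A unfolding fam_def \<alpha>L_def \<beta>L_def by (intro sum_mono) auto
    have lenR: "(\<Sum>k<n. \<beta>R k - \<alpha>R k) \<le> (\<Sum>k<n. \<beta> k - \<alpha> k)"
      using A unfolding fam_def \<alpha>R_def \<beta>R_def by (intro sum_mono) auto
    have subL: "{\<alpha>L k<..<\<beta>L k} \<subseteq> {\<alpha> k<..<\<beta> k}" for k unfolding \<alpha>L_def \<beta>L_def by auto
    have subR: "{\<alpha>R k<..<\<beta>R k} \<subseteq> {\<alpha> k<..<\<beta> k}" for k unfolding \<alpha>R_def \<beta>R_def by auto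
    have FL: "fam {a..s} n \<alpha>L \<beta>L d1"
      unfolding fam_def
    proof (intro conjI)
      show "\<forall>k<n. \<alpha>L k \<le> \<beta>L k \<and> \<alpha>L k \<in> {a..s} \<and> \<beta>L k \<in> {a..s}"
        using A assms(1) unfolding fam_def \<alpha>L_def \<beta>L_def by auto
      show "\<forall>j<n. \<forall>k<n. j \<noteq> k \<longrightarrow> {\<alpha>L j<..<\<beta>L j} \<inter> {\<alpha>L k<..<\<beta>L k} = {}"
        using A subL unfolding fam_def by blast
      show "(\<Sum>k<n. \<beta>L k - \<alpha>L k) < d1" using A lenL unfolding fam_def by linarith
    qed
    have FR: "fam {s..b} n \<alpha>R \<beta>R d2"
      unfolding fam_def
    proof (intro conjI)
      show "\<forall>k<n. \<alpha>R k \<le> \<beta>R k \<and> \<alpha>R k \<in> {s..b} \<and> \<beta>R k \<in> {s..b}"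
        using A assms(2) unfolding fam_def \<alpha>R_def \<beta>R_def by auto
      show "\<forall>j<n. \<forall>k<n. j \<noteq> k \<longrightarrow> {\<alpha>R j<..<\<beta>R j} \<inter> {\<alpha>R k<..<\<beta>R k} = {}"
        using A subR unfolding fam_def by blast
      show "(\<Sum>k<n. \<beta>R k - \<alpha>R k) < d2" using A lenR unfolding fam_def by linarith
    qed
    have pt: "norm (f (\<beta> k) - f (\<alpha> k)) \<le> norm (f (\<beta>L k) - f (\<alpha>L k)) + norm (f (\<beta>R k) - f (\<alpha>R k))"
      if "k < n" for k
    proof -
      have le: "\<alpha> k \<le> \<beta> k" using A that unfolding fam_def by auto
      show ?thesis
      proof (cases "\<beta> k \<le> s")
        case True then show ?thesis using le unfolding \<alpha>L_def \<beta>L_def \<alpha>R_def \<beta>R_def by auto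
      next
        case False
        show ?thesis
        proof (cases "\<alpha> k \<ge> s")
          case True then show ?thesis using le unfolding \<alpha>L_def \<beta>L_def \<alpha>R_def \<beta>R_def by auto
        next
          case False2: False
          have "f (\<beta> k) - f (\<alpha> k) = (f s - f (\<alpha> k)) + (f (\<beta> k) - f s)" by simp
          then have "norm (f (\<beta> k) - f (\<alpha> k)) \<le> norm (f s - f (\<alpha> k)) + norm (f (\<beta> k) - f s)"
            by (metis norm_triangle_ineq)
          then show ?thesis using False False2 unfolding \<alpha>L_def \<beta>L_def \<alpha>R_def \<beta>R_def by auto
        qed
      qed
    qed
    have "(\<Sum>k<n. norm (f (\<beta> k) - f (\<alpha> k))) \<le> (\<Sum>k<n. norm (f (\<beta>L k) - f (\<alpha>L k)) + norm (f (\<beta>R k) - f (\<alpha>R k)))"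
      using pt by (intro sum_mono) auto
    also have "\<dots> = (\<Sum>k<n. norm (f (\<beta>L k) - f (\<alpha>L k))) + (\<Sum>k<n. norm (f (\<beta>R k) - f (\<alpha>R k)))"
      by (simp add: sum.distrib)
    also have "\<dots> < e/2 + e/2" using H1[OF FL] H2[OF FR] by (intro add_strict_mono) auto
    finally show "(\<Sum>k<n. norm (f (\<beta> k) - f (\<alpha> k))) < e" by simp
  qed
qed

lemma ac_shift:
  assumes "abs_cont_on {a+c..b+c} f"
  shows "abs_cont_on {a..b} (\<lambda>t. f (t + c))"
  unfolding ac_iff
proof (intro allI impI)
  fix e :: real assume "e > 0"
  then obtain d where d: "d > 0" and H: "\<And>n a' b'. fam {a+c..b+c} n a' b' d \<Longrightarrow> (\<Sum>k<n. norm (f (b' k) - f (a' k))) < e"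
    using assms unfolding ac_iff by blast
  show "\<exists>d>0. \<forall>n a' b'. fam {a..b} n a' b' d \<longrightarrow> (\<Sum>k<n. norm (f (b' k + c) - f (a' k + c))) < e"
  proof (intro exI conjI allI impI, fact d)
    fix n and \<alpha> \<beta> :: "nat \<Rightarrow> real" assume A: "fam {a..b} n \<alpha> \<beta> d"
    have "fam {a+c..b+c} n (\<lambda>k. \<alpha> k + c) (\<lambda>k. \<beta> k + c) d"
      unfolding fam_def
    proof (intro conjI allI impI)
      fix j k assume "j < n" "k < n" "j \<noteq> k"
      then have "{\<alpha> j<..<\<beta> j} \<inter> {\<alpha> k<..<\<beta> k} = {}" using A unfolding fam_def by auto
      then show "{\<alpha> j + c<..<\<beta> j + c} \<inter> {\<alpha> k + c<..<\<beta> k + c} = {}"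
      proof -
        { fix x assume "x \<in> {\<alpha> j + c<..<\<beta> j + c}" "x \<in> {\<alpha> k + c<..<\<beta> k + c}"
          then have "x - c \<in> {\<alpha> j<..<\<beta> j} \<inter> {\<alpha> k<..<\<beta> k}" by auto
          then have False using \<open>{\<alpha> j<..<\<beta> j} \<inter> {\<alpha> k<..<\<beta> k} = {}\<close> by blast }
        then show ?thesis by blast
      qed
    qed (use A in \<open>auto simp: fam_def\<close>)
    from H[OF this] show "(\<Sum>k<n. norm (f (\<beta> k + c) - f (\<alpha> k + c))) < e" .
  qed
qed

lemma ac_reflect:
  assumes "abs_cont_on {a..b} f"
  shows "abs_cont_on {-b..-a} (\<lambda>t. f (- t))"
  unfolding ac_iff
proof (intro allI impI)
  fix e :: real assume "e > 0"
  then obtain d where d: "d > 0" and H: "\<And>n a' b'. fam {a..b} n a' b' d \<Longrightarrow> (\<Sum>k<n. norm (f (b' k) - f (a' k))) < e"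
    using assms unfolding ac_iff by blast
  show "\<exists>d>0. \<forall>n a' b'. fam {-b..-a} n a' b' d \<longrightarrow> (\<Sum>k<n. norm (f (- b' k) - f (- a' k))) < e"
  proof (intro exI conjI allI impI, fact d)
    fix n and \<alpha> \<beta> :: "nat \<Rightarrow> real" assume A: "fam {-b..-a} n \<alpha> \<beta> d"
    have "fam {a..b} n (\<lambda>k. - \<beta> k) (\<lambda>k. - \<alpha> k) d"
      unfolding fam_def
    proof (intro conjI allI impI)
      fix j k assume "j < n" "k < n" "j \<noteq> k"
      then have "{\<alpha> j<..<\<beta> j} \<inter> {\<alpha> k<..<\<beta> k} = {}" using A unfolding fam_def by auto
      then show "{- \<beta> j<..<- \<alpha> j} \<inter> {- \<beta> k<..<- \<alpha> k} = {}"
      proof -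
        { fix x assume "x \<in> {- \<beta> j<..<- \<alpha> j}" "x \<in> {- \<beta> k<..<- \<alpha> k}"
          then have "- x \<in> {\<alpha> j<..<\<beta> j} \<inter> {\<alpha> k<..<\<beta> k}" by auto
          then have False using \<open>{\<alpha> j<..<\<beta> j} \<inter> {\<alpha> k<..<\<beta> k} = {}\<close> by blast }
        then show ?thesis by blast
      qed
    next
      show "(\<Sum>k<n. - \<alpha> k - - \<beta> k) < d" using A unfolding fam_def by simp
    qed (use A in \<open>auto simp: fam_def\<close>)
    from H[OF this] show "(\<Sum>k<n. norm (f (- \<beta> k) - f (- \<alpha> k))) < e"
      by (simp add: norm_minus_commute)
  qed
qed

lemma ac_cont:
  assumes "abs_cont_on {a..b} f"
  shows "continuous_on {a..b} f"
  unfolding continuous_on_iff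
proof (intro ballI allI impI)
  fix x e assume x: "x \<in> {a..b}" and e: "(e::real) > 0"
  then obtain d where d: "d > 0" and H: "\<And>n a' b'. fam {a..b} n a' b' d \<Longrightarrow> (\<Sum>k<n. norm (f (b' k) - f (a' k))) < e"
    using assms unfolding ac_iff by blast
  show "\<exists>d>0. \<forall>y\<in>{a..b}. dist y x < d \<longrightarrow> dist (f y) (f x) < e"
  proof (intro exI conjI ballI impI, fact d)
    fix y assume y: "y \<in> {a..b}" and dy: "dist y x < d"
    have "fam {a..b} 1 (\<lambda>_. min x y) (\<lambda>_. max x y) d"
      using x y dy unfolding fam_def dist_real_def by auto
    from H[OF this] have "norm (f (max x y) - f (min x y)) < e" by simp
    then show "dist (f y) (f x) < e"
      by (cases "x \<le> y") (auto simp: dist_norm norm_minus_commute max_def min_def)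
  qed
qed

definition segsol :: "('a::euclidean_space \<Rightarrow> 'a set) \<Rightarrow> real \<Rightarrow> real \<Rightarrow> (real \<Rightarrow> 'a) \<Rightarrow> bool" where
  "segsol G a b f \<longleftrightarrow> a \<le> b \<and> abs_cont_on {a..b} f \<and>
     (\<exists>N. negligible N \<and> (\<forall>t\<in>{a<..<b} - N. \<exists>v. (f has_vector_derivative v) (at t) \<and> v \<in> G (f t)))"

lemma segsolI:
  assumes "a \<le> b" "abs_cont_on {a..b} f" "negligible N"
    "\<And>t. t\<in>{a<..<b} - N \<Longrightarrow> \<exists>v. (f has_vector_derivative v) (at t) \<and> v \<in> G (f t)"
  shows "segsol G a b f"
  using assms unfolding segsol_def by blast

lemma segsolD:
  assumes "segsol G a b f"
  shows "a \<le> b" "abs_cont_on {a..b} f"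
  using assms unfolding segsol_def by auto

lemma segsolE:
  assumes "segsol G a b f"
  obtains N where "negligible N" "\<And>t. t\<in>{a<..<b} - N \<Longrightarrow> \<exists>v. (f has_vector_derivative v) (at t) \<and> v \<in> G (f t)"
  using assms unfolding segsol_def by blast

lemma segsol_trivial: "segsol G a a f"
proof (rule segsolI[of a a f "{}"])
  show "abs_cont_on {a..a} f"
    by (rule ac_cong[OF _ ac_affine[of _ 0 "f a"]]) auto
qed auto

lemma segsol_cong:
  assumes "segsol G a b f" "\<And>t. t \<in> {a..b} \<Longrightarrow> f t = g t"
  shows "segsol G a b g"
proof -
  obtain N where N: "negligible N" "\<And>t. t\<in>{a<..<b} - N \<Longrightarrow> \<exists>v. (f has_vector_derivative v) (at t) \<and> v \<in> G (f t)"
    using segsolE[OF assms(1)] by blast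
  have "\<exists>v. (g has_vector_derivative v) (at t) \<and> v \<in> G (g t)" if t: "t\<in>{a<..<b} - N" for t
  proof -
    obtain v where v: "(f has_vector_derivative v) (at t)" "v \<in> G (f t)" using N(2)[OF t] by blast
    have "(g has_vector_derivative v) (at t)"
      by (rule has_vector_derivative_transform_within_open[OF v(1), of "{a<..<b}"]) (use t assms(2) in auto)
    then show ?thesis using v(2) assms(2)[of t] t by auto
  qed
  note der = this
  have ac: "abs_cont_on {a..b} g" using assms(2) ac_cong[of "{a..b}" f g] segsolD(2)[OF assms(1)] by blast
  have ab: "a \<le> b" using segsolD(1)[OF assms(1)] .
  show ?thesis by (rule segsolI[OF ab ac N(1)]) (use der in blast)
qed

lemma segsol_sub:
  assumes "segsol G a b f" "a \<le> c" "c \<le> d" "d \<le> b"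
  shows "segsol G c d f"
proof -
  obtain N where N: "negligible N" "\<And>t. t\<in>{a<..<b} - N \<Longrightarrow> \<exists>v. (f has_vector_derivative v) (at t) \<and> v \<in> G (f t)"
    using segsolE[OF assms(1)] by blast
  have ac: "abs_cont_on {c..d} f" using assms(2-4) ac_subset[of "{c..d}" "{a..b}" f] segsolD(2)[OF assms(1)] by auto
  have der: "\<exists>v. (f has_vector_derivative v) (at t) \<and> v \<in> G (f t)" if "t\<in>{c<..<d} - N" for t
  proof -
    have "t \<in> {a<..<b} - N" using that assms(2-4) by auto
    then show ?thesis using N(2) by blast
  qed
  show ?thesis by (rule segsolI[OF assms(3) ac N(1)]) (use der in blast)
qed

lemma segsol_glue:
  assumes "segsol G a s f" "segsol G s b f"
  shows "segsol G a b f"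
proof -
  obtain N1 where N1: "negligible N1" "\<And>t. t\<in>{a<..<s} - N1 \<Longrightarrow> \<exists>v. (f has_vector_derivative v) (at t) \<and> v \<in> G (f t)"
    using segsolE[OF assms(1)] by blast
  obtain N2 where N2: "negligible N2" "\<And>t. t\<in>{s<..<b} - N2 \<Longrightarrow> \<exists>v. (f has_vector_derivative v) (at t) \<and> v \<in> G (f t)"
    using segsolE[OF assms(2)] by blast
  have le: "a \<le> s" "s \<le> b" using segsolD assms by blast+
  have ac: "abs_cont_on {a..b} f" using ac_glue[OF le segsolD(2)[OF assms(1)] segsolD(2)[OF assms(2)]] .
  have neg: "negligible (insert s (N1 \<union> N2))" using N1(1) N2(1) negligible_insert negligible_Un by blast
  have der: "\<forall>t\<in>{a<..<b} - insert s (N1 \<union> N2). \<exists>v. (f has_vector_derivative v) (at t) \<and> v \<in> G (f t)"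
  proof
    fix t assume t: "t \<in> {a<..<b} - insert s (N1 \<union> N2)"
    show "\<exists>v. (f has_vector_derivative v) (at t) \<and> v \<in> G (f t)"
    proof (cases "t < s")
      case True then have "t \<in> {a<..<s} - N1" using t by auto
      then show ?thesis using N1(2) by blast
    next
      case False then have "t \<in> {s<..<b} - N2" using t by auto
      then show ?thesis using N2(2) by blast
    qed
  qed
  have ab: "a \<le> b" using le by linarith
  show ?thesis by (rule segsolI[OF ab ac neg]) (use der in blast)
qed

lemma segsol_shift:
  assumes "segsol G a b f"
  shows "segsol G (a+c) (b+c) (\<lambda>t. f (t - c))"
proof -
  obtain N where N: "negligible N" "\<And>t. t\<in>{a<..<b} - N \<Longrightarrow> \<exists>v. (f has_vector_derivative v) (at t) \<and> v \<in> G (f t)"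
    using segsolE[OF assms(1)] by blast
  have "abs_cont_on {a+c..b+c} (\<lambda>t. f (t + - c))"
    using ac_shift[of "a+c" "-c" "b+c" f] segsolD(2)[OF assms] by simp
  then have ac: "abs_cont_on {a+c..b+c} (\<lambda>t. f (t - c))" by simp
  have neg: "negligible ((+) c ` N)" by (rule negligible_translation[OF N(1)])
  have der: "\<forall>t\<in>{a+c<..<b+c} - (+) c ` N. \<exists>v. ((\<lambda>t. f (t - c)) has_vector_derivative v) (at t) \<and> v \<in> G (f (t - c))"
  proof
    fix t assume t: "t \<in> {a+c<..<b+c} - (+) c ` N"
    then have "t - c \<in> {a<..<b} - N" by (force simp: image_iff)
    then obtain v where v: "(f has_vector_derivative v) (at (t - c))" "v \<in> G (f (t - c))" using N(2) by blast
    have d1: "((\<lambda>t. t - c) has_vector_derivative 1) (at t)"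
      using has_vector_derivative_diff_const[of "\<lambda>t. t" c 1 "at t"] by simp
    have "((f \<circ> (\<lambda>t. t - c)) has_vector_derivative (1 *\<^sub>R v)) (at t)"
      using vector_diff_chain_at[OF d1] v(1) by simp
    then show "\<exists>v. ((\<lambda>t. f (t - c)) has_vector_derivative v) (at t) \<and> v \<in> G (f (t - c))"
      using v(2) by (auto simp: o_def)
  qed
  have ab: "a + c \<le> b + c" using segsolD(1)[OF assms] by simp
  show ?thesis by (rule segsolI[OF ab ac neg]) (use der in blast)
qed

lemma segsol_reflect:
  assumes "segsol (infl_neg F e) a b f"
  shows "segsol (infl F e) (-b) (-a) (\<lambda>t. f (- t))"
proof -
  obtain N where N: "negligible N" "\<And>t. t\<in>{a<..<b} - N \<Longrightarrow> \<exists>v. (f has_vector_derivative v) (at t) \<and> v \<in> infl_neg F e (f t)"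
    using segsolE[OF assms(1)] by blast
  have ac: "abs_cont_on {-b..-a} (\<lambda>t. f (- t))"
    using ac_reflect segsolD(2)[OF assms] by blast
  have neg: "negligible (uminus ` N)"
    by (rule negligible_differentiable_image_negligible[OF order_refl N(1)]) (use differentiable_on_minus[OF differentiable_on_ident[of N]] in simp)
  have der: "\<forall>t\<in>{-b<..<-a} - uminus ` N. \<exists>v. ((\<lambda>t. f (- t)) has_vector_derivative v) (at t) \<and> v \<in> infl F e (f (- t))"
  proof
    fix t assume t: "t \<in> {-b<..<-a} - uminus ` N"
    then have "- t \<in> {a<..<b} - N" by (force simp: image_iff)
    then obtain v where v: "(f has_vector_derivative v) (at (- t))" "v \<in> infl_neg F e (f (- t))" using N(2) by blast
    have d1: "((\<lambda>t. - t) has_vector_derivative -1) (at t)"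
      using has_vector_derivative_minus[OF has_vector_derivative_id[of "at t"]] by simp
    have "((f \<circ> (\<lambda>t. - t)) has_vector_derivative ((-1) *\<^sub>R v)) (at t)"
      using vector_diff_chain_at[OF d1] v(1) by simp
    moreover have "- v \<in> infl F e (f (- t))"
    proof -
      obtain p w where "v = - p + w" "p \<in> F (f (- t))" "norm w \<le> e (f (- t))"
        using v(2) unfolding infl_neg_def by blast
      then show ?thesis unfolding infl_def by (intro CollectI exI[of _ p] exI[of _ "- w"]) auto
    qed
    ultimately show "\<exists>v. ((\<lambda>t. f (- t)) has_vector_derivative v) (at t) \<and> v \<in> infl F e (f (- t))"
      by (auto simp: o_def)
  qed
  have ab: "-b \<le> -a" using segsolD(1)[OF assms] by simp
  show ?thesis by (rule segsolI[OF ab ac neg]) (use der in blast)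
qed

lemma segsol_is_sol:
  assumes "segsol G 0 T f"
  shows "is_sol G {0..T} f"
proof -
  obtain N where N: "negligible N" "\<And>t. t\<in>{0<..<T} - N \<Longrightarrow> \<exists>v. (f has_vector_derivative v) (at t) \<and> v \<in> G (f t)"
    using segsolE[OF assms(1)] by blast
  have "loc_abs_cont_on {0..T} f"
    using segsolD(2)[OF assms] ac_subset unfolding loc_abs_cont_on_def by blast
  moreover have "negligible (insert 0 (insert T N))" using N(1) by simp
  then have "insert 0 (insert T N) \<in> null_sets lebesgue"
    using negligible_iff_null_sets by blast
  moreover have "\<forall>t\<in>{0..T} - insert 0 (insert T N). \<exists>v. (f has_vector_derivative v) (at t within {0..T}) \<and> v \<in> G (f t)"
  proof
    fix t assume "t \<in> {0..T} - insert 0 (insert T N)"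
    then have "t \<in> {0<..<T} - N" by auto
    then obtain v where "(f has_vector_derivative v) (at t)" "v \<in> G (f t)" using N(2) by blast
    then show "\<exists>v. (f has_vector_derivative v) (at t within {0..T}) \<and> v \<in> G (f t)"
      using has_vector_derivative_at_within by blast
  qed
  moreover have "0 \<in> {0..T}" using segsolD(1)[OF assms] by auto
  ultimately show ?thesis unfolding is_sol_def using is_interval_cc by blast
qed

lemma is_sol_segsol:
  assumes "is_sol G I f" "a \<in> I" "b \<in> I" "a \<le> b"
  shows "segsol G a b f"
proof -
  have iv: "is_interval I" and lac: "loc_abs_cont_on I f" using assms unfolding is_sol_def by auto
  obtain N where N: "N \<in> null_sets lebesgue" "\<forall>t\<in>I - N. \<exists>v. (f has_vector_derivative v) (at t within I) \<and> v \<in> G (f t)"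
    using assms(1) unfolding is_sol_def by blast
  have sub: "{a..b} \<subseteq> I"
  proof
    fix x assume "x \<in> {a..b}"
    then have "a \<le> x" "x \<le> b" by auto
    then show "x \<in> I" using iv assms(2,3) unfolding is_interval_1 by blast
  qed
  have "{a<..<b} \<subseteq> interior I"
    by (rule interior_maximal) (use sub in auto)
  then have der: "\<exists>v. (f has_vector_derivative v) (at t) \<and> v \<in> G (f t)" if t: "t \<in> {a<..<b} - N" for t
  proof -
    have "t \<in> I - N" using t sub by auto
    then obtain v where v: "(f has_vector_derivative v) (at t within I)" "v \<in> G (f t)" using N(2) by blast
    have "t \<in> interior I" using t \<open>{a<..<b} \<subseteq> interior I\<close> by blast
    then have "at t within I = at t" by (rule at_within_interior)
    then show ?thesis using v by auto
  qed
  have ac: "abs_cont_on {a..b} f" using lac sub unfolding loc_abs_cont_on_def by auto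
  have neg: "negligible N" using N(1) negligible_iff_null_sets by auto
  show ?thesis by (rule segsolI[OF assms(4) ac neg]) (use der in blast)
qed

definition graph :: "real set \<Rightarrow> (real \<Rightarrow> 'a) \<Rightarrow> (real \<times> 'a) set" where
  "graph J \<psi> = (\<lambda>t. (t, \<psi> t)) ` J"

lemma graph_mem: "(t, y) \<in> graph J \<psi> \<longleftrightarrow> t \<in> J \<and> y = \<psi> t"
  unfolding graph_def by auto

lemma graph_sub: "graph J \<psi> \<subseteq> graph J' \<psi>' \<longleftrightarrow> J \<subseteq> J' \<and> (\<forall>t\<in>J. \<psi>' t = \<psi> t)"
  unfolding graph_def by auto

lemma fst_graph: "fst ` graph J \<psi> = J"
  unfolding graph_def by (simp add: image_image)

lemma graph_dom: "graph J \<psi> = graph J' \<psi>' \<Longrightarrow> J = J'"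
  using fst_graph by metis

lemma chain_union_sol:
  fixes G :: "'a::euclidean_space \<Rightarrow> 'a set"
  assumes ne: "C \<noteq> {}"
    and sols: "\<And>X. X \<in> C \<Longrightarrow> \<exists>J \<psi>. X = graph J \<psi> \<and> is_sol G J \<psi>"
    and ch: "\<And>X Y. X \<in> C \<Longrightarrow> Y \<in> C \<Longrightarrow> X \<subseteq> Y \<or> Y \<subseteq> X"
  shows "\<exists>J \<psi>. \<Union>C = graph J \<psi> \<and> is_sol G J \<psi>"
proof -
  have "\<forall>X\<in>C. \<exists>p. X = graph (fst p) (snd p) \<and> is_sol G (fst p) (snd p)"
    using sols by fastforce
  from bchoice[OF this] obtain p where p0: "\<forall>X\<in>C. X = graph (fst (p X)) (snd (p X)) \<and> is_sol G (fst (p X)) (snd (p X))"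
    by blast
  have p: "X = graph (fst (p X)) (snd (p X)) \<and> is_sol G (fst (p X)) (snd (p X))" if "X \<in> C" for X
    using p0 that by blast
  define dm where "dm X = fst (p X)" for X
  define fn where "fn X = snd (p X)" for X
  have gX: "X = graph (dm X) (fn X)" and sX: "is_sol G (dm X) (fn X)" if "X \<in> C" for X
    using p[OF that] unfolding dm_def fn_def by auto
  have agree: "fn X t = fn Y t" if "X \<in> C" "Y \<in> C" "t \<in> dm X" "t \<in> dm Y" for X Y t
  proof -
    have XX: "(t, fn X t) \<in> X" using that(3) gX[OF that(1)] graph_mem[of t "fn X t" "dm X" "fn X"] by simp
    have YY: "(t, fn Y t) \<in> Y" using that(4) gX[OF that(2)] graph_mem[of t "fn Y t" "dm Y" "fn Y"] by simp
    show ?thesis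
    proof (cases "X \<subseteq> Y")
      case True
      then have "(t, fn X t) \<in> graph (dm Y) (fn Y)" using XX gX[OF that(2)] by blast
      then show ?thesis unfolding graph_mem by simp
    next
      case False
      then have "Y \<subseteq> X" using ch[OF that(1,2)] by blast
      then have "(t, fn Y t) \<in> graph (dm X) (fn X)" using YY gX[OF that(1)] by blast
      then show ?thesis unfolding graph_mem by simp
    qed
  qed
  have domch: "dm X \<subseteq> dm Y \<or> dm Y \<subseteq> dm X" if "X \<in> C" "Y \<in> C" for X Y
  proof (cases "X \<subseteq> Y")
    case True
    then have "graph (dm X) (fn X) \<subseteq> graph (dm Y) (fn Y)" using gX that by simp
    then show ?thesis unfolding graph_sub by blast
  next
    case False
    then have "Y \<subseteq> X" using ch[OF that] by blast
    then have "graph (dm Y) (fn Y) \<subseteq> graph (dm X) (fn X)" using gX that by simp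
    then show ?thesis unfolding graph_sub by blast
  qed
  define J where "J = (\<Union>X\<in>C. dm X)"
  define \<psi> where "\<psi> t = fn (SOME X. X \<in> C \<and> t \<in> dm X) t" for t
  have psi: "\<psi> t = fn X t" if "X \<in> C" "t \<in> dm X" for X t
  proof -
    have "\<exists>X. X \<in> C \<and> t \<in> dm X" using that by blast
    then have "(SOME X. X \<in> C \<and> t \<in> dm X) \<in> C \<and> t \<in> dm (SOME X. X \<in> C \<and> t \<in> dm X)"
      by (rule someI_ex)
    then show ?thesis unfolding \<psi>_def using agree that by blast
  qed
  have two: "\<exists>X\<in>C. a \<in> dm X \<and> b \<in> dm X" if ab: "a \<in> J" "b \<in> J" for a b
  proof -
    obtain X Y where "X \<in> C" "Y \<in> C" "a \<in> dm X" "b \<in> dm Y" using ab unfolding J_def by blast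
    then show ?thesis using domch[of X Y] by blast
  qed
  have ivX: "is_interval (dm X)" "0 \<in> dm X" "loc_abs_cont_on (dm X) (fn X)" if "X \<in> C" for X
    using sX[OF that] unfolding is_sol_def by auto
  have U: "\<Union>C = graph J \<psi>"
  proof (intro set_eqI iffI)
    fix z assume "z \<in> \<Union>C"
    then obtain X where X: "X \<in> C" "z \<in> X" by blast
    then obtain t where "z = (t, fn X t)" "t \<in> dm X" using gX[OF X(1)] unfolding graph_def by auto
    then show "z \<in> graph J \<psi>" using X psi unfolding J_def graph_def by auto
  next
    fix z assume "z \<in> graph J \<psi>"
    then obtain t where t: "z = (t, \<psi> t)" "t \<in> J" unfolding graph_def by auto
    then obtain X where X: "X \<in> C" "t \<in> dm X" unfolding J_def by blast
    then have "\<psi> t = fn X t" using psi by blast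
    then have "z \<in> graph (dm X) (fn X)" using t(1) X(2) graph_mem[of t "fn X t" "dm X" "fn X"] by simp
    then have "z \<in> X" using gX[OF X(1)] by simp
    then show "z \<in> \<Union>C" using X by blast
  qed
  have ivJ: "is_interval J"
    unfolding is_interval_1
  proof (intro ballI allI impI)
    fix a b x assume "a \<in> J" "b \<in> J" "a \<le> x \<and> x \<le> b"
    then obtain X where "X \<in> C" "a \<in> dm X" "b \<in> dm X" using two by blast
    then have "x \<in> dm X" using ivX \<open>a \<le> x \<and> x \<le> b\<close> unfolding is_interval_1 by blast
    then show "x \<in> J" using \<open>X \<in> C\<close> unfolding J_def by blast
  qed
  obtain X0 where X0: "X0 \<in> C" using ne by blast
  have zeroJ: "0 \<in> J" using ivX(2)[OF X0] X0 unfolding J_def by blast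
  have lac: "loc_abs_cont_on J \<psi>"
    unfolding loc_abs_cont_on_def
  proof (intro allI impI)
    fix a b assume sub: "{a..b} \<subseteq> J"
    show "abs_cont_on {a..b} \<psi>"
    proof (cases "a \<le> b")
      case True
      then have "a \<in> J" "b \<in> J" using sub by auto
      then obtain X where X: "X \<in> C" "a \<in> dm X" "b \<in> dm X" using two by blast
      have subX: "{a..b} \<subseteq> dm X"
      proof
        fix x assume "x \<in> {a..b}"
        then have "a \<le> x" "x \<le> b" by auto
        then show "x \<in> dm X" using ivX(1)[OF X(1)] X(2,3) unfolding is_interval_1 by blast
      qed
      then have "abs_cont_on {a..b} (fn X)" using ivX(3)[OF X(1)] unfolding loc_abs_cont_on_def by blast
      then show ?thesis by (rule ac_cong[rotated]) (use psi X subX in auto)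
    next
      case False
      then have e: "{a..b} = {}" by auto
      then have "{a..b} \<subseteq> dm X0" by simp
      then have "abs_cont_on {a..b} (fn X0)" using ivX(3)[OF X0] unfolding loc_abs_cont_on_def by blast
      then show ?thesis by (rule ac_cong[rotated]) (use e in auto)
    qed
  qed
  have "\<forall>X\<in>C. \<exists>N. N \<in> null_sets lebesgue \<and>
        (\<forall>t\<in>dm X - N. \<exists>v. (fn X has_vector_derivative v) (at t within dm X) \<and> v \<in> G (fn X t))"
    using sX unfolding is_sol_def by blast
  from bchoice[OF this] obtain NX where NX0: "\<forall>X\<in>C. NX X \<in> null_sets lebesgue \<and>
        (\<forall>t\<in>dm X - NX X. \<exists>v. (fn X has_vector_derivative v) (at t within dm X) \<and> v \<in> G (fn X t))"
    by blast
  have NX: "\<And>X. X \<in> C \<Longrightarrow> NX X \<in> null_sets lebesgue"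
    "\<And>X t. X \<in> C \<Longrightarrow> t \<in> dm X - NX X \<Longrightarrow> \<exists>v. (fn X has_vector_derivative v) (at t within dm X) \<and> v \<in> G (fn X t)"
    using NX0 by blast+
  obtain \<F>' where F': "\<F>' \<subseteq> (\<lambda>X. interior (dm X)) ` C" "countable \<F>'"
      "\<Union>\<F>' = \<Union>((\<lambda>X. interior (dm X)) ` C)"
    using Lindelof[of "(\<lambda>X. interior (dm X)) ` C"] by auto
  have "\<forall>S\<in>\<F>'. \<exists>X. X \<in> C \<and> S = interior (dm X)" using F'(1) by auto
  from bchoice[OF this] obtain xs where xs0: "\<forall>S\<in>\<F>'. xs S \<in> C \<and> S = interior (dm (xs S))" by blast
  have xs: "\<And>S. S \<in> \<F>' \<Longrightarrow> xs S \<in> C \<and> S = interior (dm (xs S))" using xs0 by blast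
  define N where "N = frontier J \<union> \<Union>((\<lambda>S. NX (xs S)) ` \<F>')"
  have negN: "negligible N"
  proof -
    have "negligible (frontier J)" using ivJ by (intro negligible_convex_frontier is_interval_convex)
    moreover have "negligible (\<Union>((\<lambda>S. NX (xs S)) ` \<F>'))"
    proof (rule negligible_countable_Union)
      show "countable ((\<lambda>S. NX (xs S)) ` \<F>')" using F'(2) by simp
      show "negligible T" if "T \<in> (\<lambda>S. NX (xs S)) ` \<F>'" for T
        using that xs NX(1) negligible_iff_null_sets by auto
    qed
    ultimately show ?thesis unfolding N_def by simp
  qed
  have der: "\<exists>v. (\<psi> has_vector_derivative v) (at t within J) \<and> v \<in> G (\<psi> t)" if t: "t \<in> J - N" for t
  proof -
    have "t \<in> closure J" using t closure_subset by blast
    then have tint: "t \<in> interior J" using t unfolding N_def frontier_def by blast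
    then obtain e where e: "e > 0" "ball t e \<subseteq> J" using mem_interior by blast
    then have "t - e/2 \<in> J" "t + e/2 \<in> J" by (auto simp: dist_real_def subset_iff)
    then obtain X where X: "X \<in> C" "t - e/2 \<in> dm X" "t + e/2 \<in> dm X" using two by blast
    have "{t - e/2<..<t + e/2} \<subseteq> dm X"
    proof
      fix x assume "x \<in> {t - e/2<..<t + e/2}"
      then have "t - e/2 \<le> x" "x \<le> t + e/2" by auto
      then show "x \<in> dm X" using ivX(1)[OF X(1)] X(2,3) unfolding is_interval_1 by blast
    qed
    then have "{t - e/2<..<t + e/2} \<subseteq> interior (dm X)"
      by (rule interior_maximal) simp
    moreover have "t \<in> {t - e/2<..<t + e/2}" using e(1) by simp
    ultimately have "t \<in> interior (dm X)" by blast
    then have "t \<in> \<Union>\<F>'" using F'(3) X(1) by blast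
    then obtain S where S: "S \<in> \<F>'" "t \<in> S" by blast
    define Y where "Y = xs S"
    have Y: "Y \<in> C" "S = interior (dm Y)" using xs[OF S(1)] unfolding Y_def by auto
    have tY: "t \<in> interior (dm Y)" using S Y by simp
    have "t \<notin> NX Y" using t S unfolding N_def Y_def by blast
    then have "t \<in> dm Y - NX Y" using tY interior_subset by blast
    then obtain v where v: "(fn Y has_vector_derivative v) (at t within dm Y)" "v \<in> G (fn Y t)"
      using NX(2)[OF Y(1)] by blast
    have "at t within dm Y = at t" using tY by (rule at_within_interior)
    then have dY: "(fn Y has_vector_derivative v) (at t)" using v(1) by simp
    have eqY: "fn Y y = \<psi> y" if "y \<in> interior (dm Y)" for y
    proof -
      have "y \<in> dm Y" using that interior_subset by blast
      then show ?thesis using psi[OF Y(1)] by simp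
    qed
    have "(\<psi> has_vector_derivative v) (at t)"
      by (rule has_vector_derivative_transform_within_open[OF dY open_interior tY eqY])
    then have d2: "(\<psi> has_vector_derivative v) (at t within J)"
      by (rule has_vector_derivative_at_within)
    have "\<psi> t = fn Y t" using eqY[OF tY] by simp
    then show ?thesis using v(2) d2 by auto
  qed
  have nullN: "N \<in> null_sets lebesgue" using negN negligible_iff_null_sets by blast
  have D: "\<forall>t\<in>J - N. \<exists>v. (\<psi> has_vector_derivative v) (at t within J) \<and> v \<in> G (\<psi> t)"
    using der by blast
  have "is_sol G J \<psi>"
    unfolding is_sol_def using ivJ zeroJ lac D nullN by blast
  then show ?thesis using U by blast
qed

lemma max_ext:
  fixes G :: "'a::euclidean_space \<Rightarrow> 'a set"
  assumes "is_sol G I \<phi>"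
  shows "\<exists>J \<psi>. is_max_sol G J \<psi> \<and> I \<subseteq> J \<and> (\<forall>t\<in>I. \<psi> t = \<phi> t)"
proof -
  define A where "A = {graph J \<psi> | J \<psi>. is_sol G J \<psi> \<and> I \<subseteq> J \<and> (\<forall>t\<in>I. \<psi> t = \<phi> t)}"
  have zch: "\<forall>C\<in>chains A. \<exists>U\<in>A. \<forall>X\<in>C. X \<subseteq> U"
  proof
    fix C assume C: "C \<in> chains A"
    show "\<exists>U\<in>A. \<forall>X\<in>C. X \<subseteq> U"
    proof (cases "C = {}")
      case True
      have "graph I \<phi> \<in> A" unfolding A_def using assms by blast
      then show ?thesis using True by blast
    next
      case False
      have CA: "C \<subseteq> A" and ch: "\<And>X Y. X \<in> C \<Longrightarrow> Y \<in> C \<Longrightarrow> X \<subseteq> Y \<or> Y \<subseteq> X"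
        using C unfolding chains_def chain_subset_def by auto
      have "\<And>X. X \<in> C \<Longrightarrow> \<exists>J \<psi>. X = graph J \<psi> \<and> is_sol G J \<psi>" using CA unfolding A_def by blast
      then obtain J \<psi> where U: "\<Union>C = graph J \<psi>" "is_sol G J \<psi>"
        using chain_union_sol[OF False _ ch] by blast
      obtain X0 where X0: "X0 \<in> C" using False by blast
      then obtain J0 \<psi>0 where X0': "X0 = graph J0 \<psi>0" "I \<subseteq> J0" "\<forall>t\<in>I. \<psi>0 t = \<phi> t"
        using CA unfolding A_def by blast
      have "X0 \<subseteq> graph J \<psi>" using X0 U(1) by blast
      then have "graph J0 \<psi>0 \<subseteq> graph J \<psi>" using X0'(1) by simp
      then have "J0 \<subseteq> J \<and> (\<forall>t\<in>J0. \<psi> t = \<psi>0 t)" using graph_sub[of J0 \<psi>0 J \<psi>] by blast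
      then have "J0 \<subseteq> J" "\<forall>t\<in>J0. \<psi> t = \<psi>0 t" by auto
      then have "I \<subseteq> J" "\<forall>t\<in>I. \<psi> t = \<phi> t" using X0'(2,3) by auto
      then have "graph J \<psi> \<in> A" unfolding A_def using U(2) by blast
      then show ?thesis using U(1) by blast
    qed
  qed
  obtain M where M0: "M \<in> A" "\<forall>X\<in>A. M \<subseteq> X \<longrightarrow> X = M"
    using Zorn_Lemma2[OF zch] by blast
  have M: "M \<in> A" "\<And>X. X \<in> A \<Longrightarrow> M \<subseteq> X \<Longrightarrow> X = M" using M0 by auto
  then obtain J \<psi> where J: "M = graph J \<psi>" "is_sol G J \<psi>" "I \<subseteq> J" "\<forall>t\<in>I. \<psi> t = \<phi> t"
    unfolding A_def by blast
  have "is_max_sol G J \<psi>"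
    unfolding is_max_sol_def
  proof (intro conjI notI)
    show "is_sol G J \<psi>" by (fact J(2))
    assume "\<exists>J' \<psi>'. is_sol G J' \<psi>' \<and> J \<subset> J' \<and> (\<forall>t\<in>J. \<psi>' t = \<psi> t)"
    then obtain J' \<psi>' where J': "is_sol G J' \<psi>'" "J \<subset> J'" "\<forall>t\<in>J. \<psi>' t = \<psi> t" by blast
    have "I \<subseteq> J'" "\<forall>t\<in>I. \<psi>' t = \<phi> t" using J'(2,3) J(3,4) by auto
    then have "graph J' \<psi>' \<in> A" unfolding A_def using J'(1) by blast
    moreover have "J \<subseteq> J'" using J'(2) by (rule psubset_imp_subset)
    then have "graph J \<psi> \<subseteq> graph J' \<psi>'" unfolding graph_sub using J'(3) by simp
    then have "M \<subseteq> graph J' \<psi>'" using J(1) by simp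
    ultimately have "graph J' \<psi>' = M" by (rule M(2))
    then have "graph J' \<psi>' = graph J \<psi>" using J(1) by simp
    then have "J' = J" by (rule graph_dom)
    then show False using J'(2) by simp
  qed
  then show ?thesis using J by blast
qed

lemma K_char:
  "y \<in> Kset F e Xo \<longleftrightarrow> (\<exists>s f. segsol (infl F e) 0 s f \<and> f 0 \<in> Xo \<and> f s = y)"
proof
  assume "y \<in> Kset F e Xo"
  then obtain t x I \<phi> s where "x \<in> Xo" "(I, \<phi>) \<in> Sols (infl F e) x" "s \<in> I \<inter> {0..t}" "y = \<phi> s"
    unfolding Kset_def Reach_def by blast
  then have "is_sol (infl F e) I \<phi>" "\<phi> 0 = x" "s \<in> I" "0 \<in> I" "0 \<le> s" "y = \<phi> s"
    unfolding Sols_def is_max_sol_def is_sol_def by auto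
  then show "\<exists>s f. segsol (infl F e) 0 s f \<and> f 0 \<in> Xo \<and> f s = y"
    using is_sol_segsol[of "infl F e" I \<phi> 0 s] \<open>x \<in> Xo\<close> by auto
next
  assume "\<exists>s f. segsol (infl F e) 0 s f \<and> f 0 \<in> Xo \<and> f s = y"
  then obtain s f where sf: "segsol (infl F e) 0 s f" "f 0 \<in> Xo" "f s = y" by blast
  then have s0: "0 \<le> s" using segsolD by blast
  obtain J \<psi> where J: "is_max_sol (infl F e) J \<psi>" "{0..s} \<subseteq> J" "\<forall>t\<in>{0..s}. \<psi> t = f t"
    using max_ext[OF segsol_is_sol[OF sf(1)]] by blast
  have "(J, \<psi>) \<in> Sols (infl F e) (f 0)" unfolding Sols_def using J s0 by auto
  moreover have "s \<in> J \<inter> {0..s}" "\<psi> s = y" using J s0 sf(3) by auto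
  ultimately have "y \<in> Reach (infl F e) s (f 0)" unfolding Reach_def by blast
  then show "y \<in> Kset F e Xo" unfolding Kset_def using s0 sf(2) by blast
qed

lemma F_local:
  fixes F :: "'a::euclidean_space \<Rightarrow> 'a set" and g :: "'a \<Rightarrow> real"
  assumes F_cont: "sv_continuous F" and F_compact: "\<And>x. compact (F x)"
    and g_cont: "continuous_on UNIV g" and eta: "\<eta> > 0"
  shows "\<exists>r>0. \<forall>x y. dist x0 x < r \<longrightarrow> dist x0 y < r \<longrightarrow>
            (\<forall>v\<in>F x. \<exists>u\<in>F y. dist v u < \<eta>) \<and> \<bar>g x - g y\<bar> < \<eta>"
proof -
  define U0 where "U0 = (\<Union>u\<in>F x0. ball u (\<eta>/2))"
  have oU: "open U0" unfolding U0_def by (simp add: open_UN)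
  have sU: "F x0 \<subseteq> U0"
  proof
    fix u assume "u \<in> F x0"
    moreover have "u \<in> ball u (\<eta>/2)" using eta by simp
    ultimately show "u \<in> U0" unfolding U0_def by blast
  qed
  have usc: "usc_at F x0" and lsc: "lsc_at F x0" using F_cont unfolding sv_continuous_def by blast+
  have "\<exists>\<delta>>0. \<forall>y\<in>ball x0 \<delta>. F y \<subseteq> U0" using usc oU sU unfolding usc_at_def by blast
  then obtain d1 where d1: "d1 > 0" "\<And>y. y \<in> ball x0 d1 \<Longrightarrow> F y \<subseteq> U0" by blast
  have cov: "F x0 \<subseteq> (\<Union>c\<in>F x0. ball c (\<eta>/4))"
  proof
    fix u assume "u \<in> F x0"
    moreover have "u \<in> ball u (\<eta>/4)" using eta by simp
    ultimately show "u \<in> (\<Union>c\<in>F x0. ball c (\<eta>/4))" by blast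
  qed
  obtain T where T: "T \<subseteq> F x0" "finite T" "F x0 \<subseteq> (\<Union>c\<in>T. ball c (\<eta>/4))"
    using compactE_image[OF F_compact[of x0], of "F x0" "\<lambda>c. ball c (\<eta>/4)"] cov by blast
  have ev: "eventually (\<lambda>y. F y \<inter> ball c (\<eta>/4) \<noteq> {}) (nhds x0)" if c: "c \<in> T" for c
  proof -
    have "c \<in> ball c (\<eta>/4)" using eta by simp
    then have ne: "F x0 \<inter> ball c (\<eta>/4) \<noteq> {}" using c T(1) by blast
    have "\<exists>\<delta>>0. \<forall>y\<in>ball x0 \<delta>. F y \<inter> ball c (\<eta>/4) \<noteq> {}"
      using lsc ne open_ball[of c "\<eta>/4"] unfolding lsc_at_def by blast
    then obtain d where d: "d > 0" "\<And>y. y \<in> ball x0 d \<Longrightarrow> F y \<inter> ball c (\<eta>/4) \<noteq> {}" by blast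
    have "\<forall>y. dist y x0 < d \<longrightarrow> F y \<inter> ball c (\<eta>/4) \<noteq> {}"
    proof (intro allI impI)
      fix y assume "dist y x0 < d"
      then have "y \<in> ball x0 d" by (simp add: dist_commute)
      then show "F y \<inter> ball c (\<eta>/4) \<noteq> {}" by (rule d(2))
    qed
    then have "\<exists>d>0. \<forall>y. dist y x0 < d \<longrightarrow> F y \<inter> ball c (\<eta>/4) \<noteq> {}" using d(1) by blast
    then show ?thesis by (simp only: eventually_nhds_metric)
  qed
  have "eventually (\<lambda>y. \<forall>c\<in>T. F y \<inter> ball c (\<eta>/4) \<noteq> {}) (nhds x0)"
    by (rule eventually_ball_finite[OF T(2)]) (use ev in blast)
  then have "\<exists>d>0. \<forall>y. dist y x0 < d \<longrightarrow> (\<forall>c\<in>T. F y \<inter> ball c (\<eta>/4) \<noteq> {})"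
    by (simp only: eventually_nhds_metric)
  then obtain d2 where d2: "d2 > 0" "\<And>y. dist y x0 < d2 \<Longrightarrow> \<forall>c\<in>T. F y \<inter> ball c (\<eta>/4) \<noteq> {}"
    by blast
  have "\<forall>\<epsilon>>0. \<exists>\<delta>>0. \<forall>x'\<in>UNIV. dist x' x0 < \<delta> \<longrightarrow> dist (g x') (g x0) < \<epsilon>"
    using g_cont unfolding continuous_on_iff by blast
  moreover have "\<eta>/2 > 0" using eta by simp
  ultimately have "\<exists>\<delta>>0. \<forall>x'\<in>UNIV. dist x' x0 < \<delta> \<longrightarrow> dist (g x') (g x0) < \<eta>/2" by blast
  then obtain d3 where d3: "d3 > 0" "\<And>y. dist y x0 < d3 \<Longrightarrow> dist (g y) (g x0) < \<eta>/2" by blast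
  define r where "r = min d1 (min d2 d3)"
  have "r > 0" using d1 d2 d3 unfolding r_def by simp
  moreover have "(\<forall>v\<in>F x. \<exists>u\<in>F y. dist v u < \<eta>) \<and> \<bar>g x - g y\<bar> < \<eta>"
    if xy: "dist x0 x < r" "dist x0 y < r" for x y
  proof
    have "dist x x0 < d3" "dist y x0 < d3" using xy unfolding r_def by (simp_all add: dist_commute)
    then have "dist (g x) (g x0) < \<eta>/2" "dist (g y) (g x0) < \<eta>/2" using d3(2) by blast+
    then show "\<bar>g x - g y\<bar> < \<eta>" unfolding dist_real_def by linarith
    show "\<forall>v\<in>F x. \<exists>u\<in>F y. dist v u < \<eta>"
    proof
      fix v assume v: "v \<in> F x"
      have "x \<in> ball x0 d1" using xy unfolding r_def by simp
      then have "v \<in> U0" using d1(2) v by blast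
      then obtain u0 where u0: "u0 \<in> F x0" "dist u0 v < \<eta>/2" unfolding U0_def by auto
      then obtain c where c: "c \<in> T" "dist c u0 < \<eta>/4" using T(3) by auto
      have "dist y x0 < d2" using xy unfolding r_def by (simp add: dist_commute)
      then have "F y \<inter> ball c (\<eta>/4) \<noteq> {}" using d2(2) c(1) by blast
      then obtain w where w: "w \<in> F y" "dist c w < \<eta>/4" by auto
      have t1: "dist v w \<le> dist v u0 + dist u0 w" by (rule dist_triangle)
      have t2: "dist u0 w \<le> dist u0 c + dist c w" by (rule dist_triangle)
      have "dist v u0 = dist u0 v" "dist u0 c = dist c u0" by (simp_all add: dist_commute)
      then have "dist v w < \<eta>" using t1 t2 u0(2) c(2) w(2) by linarith
      then show "\<exists>u\<in>F y. dist v u < \<eta>" using w(1) by blast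
    qed
  qed
  ultimately show ?thesis by blast
qed

lemma F_unif:
  fixes F :: "'a::euclidean_space \<Rightarrow> 'a set" and g :: "'a \<Rightarrow> real"
  assumes F_cont: "sv_continuous F" and F_compact: "\<And>x. compact (F x)"
    and g_cont: "continuous_on UNIV g" and eta: "\<eta> > 0" and C: "compact C"
  shows "\<exists>e>0. \<forall>x\<in>C. \<forall>y. dist x y < e \<longrightarrow>
            (\<forall>v\<in>F x. \<exists>u\<in>F y. dist v u < \<eta>) \<and> \<bar>g x - g y\<bar> < \<eta>"
proof -
  have "\<forall>x0. \<exists>r>0. \<forall>x y. dist x0 x < r \<longrightarrow> dist x0 y < r \<longrightarrow>
            (\<forall>v\<in>F x. \<exists>u\<in>F y. dist v u < \<eta>) \<and> \<bar>g x - g y\<bar> < \<eta>"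
    using F_local[OF F_cont F_compact g_cont eta] by blast
  from choice[OF this] obtain r where r0: "\<forall>x0. r x0 > 0 \<and> (\<forall>x y. dist x0 x < r x0 \<longrightarrow> dist x0 y < r x0 \<longrightarrow>
            (\<forall>v\<in>F x. \<exists>u\<in>F y. dist v u < \<eta>) \<and> \<bar>g x - g y\<bar> < \<eta>)"
    by blast
  have r: "\<And>x0. r x0 > 0" "\<And>x0 x y. dist x0 x < r x0 \<Longrightarrow> dist x0 y < r x0 \<Longrightarrow>
            (\<forall>v\<in>F x. \<exists>u\<in>F y. dist v u < \<eta>) \<and> \<bar>g x - g y\<bar> < \<eta>"
    using r0 by blast+
  have "C \<subseteq> \<Union>(range (\<lambda>x0. ball x0 (r x0)))"
  proof
    fix x assume "x \<in> C"
    have "x \<in> ball x (r x)" using r(1)[of x] by simp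
    then show "x \<in> \<Union>(range (\<lambda>x0. ball x0 (r x0)))" by blast
  qed
  then obtain e where e: "e > 0" "\<And>x. x \<in> C \<Longrightarrow> \<exists>G\<in>range (\<lambda>x0. ball x0 (r x0)). ball x e \<subseteq> G"
    using Heine_Borel_lemma[OF C, of "range (\<lambda>x0. ball x0 (r x0))"] by blast
  have "(\<forall>v\<in>F x. \<exists>u\<in>F y. dist v u < \<eta>) \<and> \<bar>g x - g y\<bar> < \<eta>" if xy: "x \<in> C" "dist x y < e" for x y
  proof -
    obtain x0 where "ball x e \<subseteq> ball x0 (r x0)" using e(2)[OF xy(1)] by blast
    moreover have "x \<in> ball x e" "y \<in> ball x e" using e(1) xy(2) by auto
    ultimately have "x \<in> ball x0 (r x0)" "y \<in> ball x0 (r x0)" by blast+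
    then have "dist x0 x < r x0" "dist x0 y < r x0" by simp_all
    then show ?thesis using r(2) by blast
  qed
  then show ?thesis using e(1) by blast
qed

lemma track:
  fixes F :: "'a::euclidean_space \<Rightarrow> 'a set"
  assumes F_cont: "sv_continuous F" and F_compact: "\<And>x. compact (F x)"
    and ebar_cont: "continuous_on UNIV ebar" and eps_cont: "continuous_on UNIV eps"
    and lt: "\<And>x. eps x < ebar x"
    and seg: "segsol (infl F eps) t0 t1 \<phi>" and tt: "t0 < t1"
  shows "\<exists>\<delta>>0. \<forall>z y. dist z (\<phi> t0) < \<delta> \<longrightarrow> dist y (\<phi> t1) < \<delta> \<longrightarrow>
           (\<exists>p. segsol (infl F ebar) t0 t1 p \<and> p t0 = z \<and> p t1 = y)"
proof -
  have ac\<phi>: "abs_cont_on {t0..t1} \<phi>" using segsolD(2)[OF seg] .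
  have cont\<phi>: "continuous_on {t0..t1} \<phi>" by (rule ac_cont[OF ac\<phi>])
  define C where "C = \<phi> ` {t0..t1}"
  have cC: "compact C" unfolding C_def by (rule compact_continuous_image[OF cont\<phi> compact_Icc])
  have neC: "C \<noteq> {}" unfolding C_def using tt by auto
  have ch: "continuous_on C (\<lambda>x. ebar x - eps x)"
    by (rule continuous_on_diff[OF continuous_on_subset[OF ebar_cont] continuous_on_subset[OF eps_cont]]) auto
  obtain xm where xm: "xm \<in> C" "\<And>y. y \<in> C \<Longrightarrow> ebar xm - eps xm \<le> ebar y - eps y"
    using continuous_attains_inf[OF cC neC ch] by blast
  define m where "m = ebar xm - eps xm"
  have m0: "m > 0" using lt[of xm] unfolding m_def by simp
  have mle: "m \<le> ebar x - eps x" if "x \<in> C" for x using xm(2)[OF that] unfolding m_def .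
  have m4: "m/4 > 0" using m0 by simp
  obtain e where e: "e > 0"
      "\<And>x y. x \<in> C \<Longrightarrow> dist x y < e \<Longrightarrow> (\<forall>v\<in>F x. \<exists>u\<in>F y. dist v u < m/4) \<and> \<bar>ebar x - ebar y\<bar> < m/4"
    using F_unif[OF F_cont F_compact ebar_cont m4 cC] by blast
  define T where "T = t1 - t0"
  have T0: "T > 0" using tt unfolding T_def by simp
  define \<delta> where "\<delta> = min (e/3) (m*T/8)"
  have \<delta>0: "\<delta> > 0" using e(1) m0 T0 unfolding \<delta>_def by simp
  have \<delta>1: "\<delta> \<le> e/3" and \<delta>2: "\<delta> \<le> m*T/8" unfolding \<delta>_def by simp_all
  have main: "\<exists>p. segsol (infl F ebar) t0 t1 p \<and> p t0 = z \<and> p t1 = y"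
    if z: "dist z (\<phi> t0) < \<delta>" and y: "dist y (\<phi> t1) < \<delta>" for z y
  proof -
    define a where "a = z - \<phi> t0"
    define b where "b = y - \<phi> t1"
    define c where "c = (1/T) *\<^sub>R (b - a)"
    define d where "d = a - t0 *\<^sub>R c"
    define \<psi> where "\<psi> t = \<phi> t + (t *\<^sub>R c + d)" for t
    have na: "norm a < \<delta>" using z unfolding a_def dist_norm .
    have nb: "norm b < \<delta>" using y unfolding b_def dist_norm .
    have Tc: "T *\<^sub>R c = b - a" unfolding c_def using T0 by simp
    have nba: "norm (b - a) < 2*\<delta>" using na nb norm_triangle_ineq4[of b a] by linarith
    have nc: "norm c = norm (b - a) / T" unfolding c_def using T0 by simp
    have "norm (b - a) < m * T / 4" using nba \<delta>2 by linarith
    then have ncm: "norm c < m/4" unfolding nc using T0 by (simp add: divide_less_eq)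
    have \<psi>0: "\<psi> t0 = z" unfolding \<psi>_def d_def a_def by simp
    have "t1 *\<^sub>R c + d = T *\<^sub>R c + a" unfolding d_def T_def by (simp add: algebra_simps)
    then have \<psi>1: "\<psi> t1 = y" unfolding \<psi>_def using Tc unfolding b_def by simp
    have dist\<psi>: "dist (\<phi> t) (\<psi> t) < e" if t: "t \<in> {t0..t1}" for t
    proof -
      have "\<psi> t - \<phi> t = (t - t0) *\<^sub>R c + a" unfolding \<psi>_def d_def by (simp add: algebra_simps)
      then have "norm (\<psi> t - \<phi> t) \<le> norm ((t - t0) *\<^sub>R c) + norm a" by (metis norm_triangle_ineq)
      also have "norm ((t - t0) *\<^sub>R c) = (t - t0) * norm c" using t by simp
      also have "(t - t0) * norm c \<le> T * norm c" using t unfolding T_def by (intro mult_right_mono) auto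
      also have "T * norm c = norm (b - a)" unfolding nc using T0 by simp
      finally have "norm (\<psi> t - \<phi> t) < 3 * \<delta>" using nba na by linarith
      then show ?thesis using \<delta>1 by (simp add: dist_norm norm_minus_commute)
    qed
    have ac\<psi>: "abs_cont_on {t0..t1} \<psi>" unfolding \<psi>_def by (rule ac_add[OF ac\<phi> ac_affine])
    obtain N where N: "negligible N"
      "\<And>t. t\<in>{t0<..<t1} - N \<Longrightarrow> \<exists>v. (\<phi> has_vector_derivative v) (at t) \<and> v \<in> infl F eps (\<phi> t)"
      using segsolE[OF seg] by blast
    have der: "\<exists>v. (\<psi> has_vector_derivative v) (at t) \<and> v \<in> infl F ebar (\<psi> t)"
      if t: "t\<in>{t0<..<t1} - N" for t
    proof -
      obtain v where v: "(\<phi> has_vector_derivative v) (at t)" "v \<in> infl F eps (\<phi> t)" using N(2)[OF t] by blast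
      have dl: "((\<lambda>t. t *\<^sub>R c) has_vector_derivative c) (at t)"
        using bounded_linear.has_vector_derivative[OF bounded_linear_scaleR_left has_vector_derivative_id, of c "at t"]
        by simp
      have "((\<lambda>t. t *\<^sub>R c + d) has_vector_derivative c + 0) (at t)"
        by (rule has_vector_derivative_add[OF dl has_vector_derivative_const])
      then have d\<psi>: "(\<psi> has_vector_derivative v + c) (at t)"
        unfolding \<psi>_def using has_vector_derivative_add[OF v(1)] by simp
      obtain v1 w where vw: "v = v1 + w" "v1 \<in> F (\<phi> t)" "norm w \<le> eps (\<phi> t)"
        using v(2) unfolding infl_def by blast
      have tC: "\<phi> t \<in> C" using t unfolding C_def by auto
      have "dist (\<phi> t) (\<psi> t) < e" using dist\<psi> t by auto
      then have U: "\<forall>v\<in>F (\<phi> t). \<exists>u\<in>F (\<psi> t). dist v u < m/4" "\<bar>ebar (\<phi> t) - ebar (\<psi> t)\<bar> < m/4"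
        using e(2)[OF tC] by blast+
      obtain u where u: "u \<in> F (\<psi> t)" "dist v1 u < m/4" using U(1) vw(2) by blast
      have "norm ((v1 - u) + w + c) \<le> norm (v1 - u) + norm w + norm c"
        by (metis norm_triangle_ineq order_trans add_right_mono)
      also have "\<dots> < m/4 + eps (\<phi> t) + m/4" using u(2) vw(3) ncm unfolding dist_norm by linarith
      also have "\<dots> \<le> ebar (\<psi> t)" using mle[OF tC] U(2) by linarith
      finally have nle: "norm ((v1 - u) + w + c) \<le> ebar (\<psi> t)" by simp
      have "v + c = u + ((v1 - u) + w + c)" using vw(1) by (simp add: algebra_simps)
      then have "v + c \<in> infl F ebar (\<psi> t)" unfolding infl_def using u(1) nle by blast
      then show ?thesis using d\<psi> by blast
    qed
    have "segsol (infl F ebar) t0 t1 \<psi>"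
      by (rule segsolI[OF less_imp_le[OF tt] ac\<psi> N(1)]) (use der in blast)
    then show ?thesis using \<psi>0 \<psi>1 by blast
  qed
  show ?thesis using \<delta>0 main by blast
qed

lemma reach_int:
  fixes F :: "'a::euclidean_space \<Rightarrow> 'a set"
  assumes F_cont: "sv_continuous F" and F_compact: "\<And>x. compact (F x)"
    and ebar_cont: "continuous_on UNIV ebar" and eps_cont: "continuous_on UNIV eps"
    and lt: "\<And>x. eps x < ebar x"
    and seg: "segsol (infl F eps) t0 t1 \<phi>" and tt: "t0 < t1"
    and cl: "\<phi> t0 \<in> closure (Kset F ebar Xo)"
  shows "\<phi> t1 \<in> interior (Kset F ebar Xo)"
proof -
  obtain \<delta> where \<delta>: "\<delta> > 0" and H: "\<And>z y. dist z (\<phi> t0) < \<delta> \<Longrightarrow> dist y (\<phi> t1) < \<delta> \<Longrightarrow>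
           (\<exists>p. segsol (infl F ebar) t0 t1 p \<and> p t0 = z \<and> p t1 = y)"
    using track[OF F_cont F_compact ebar_cont eps_cont lt seg tt] by blast
  obtain z where z: "z \<in> Kset F ebar Xo" "dist z (\<phi> t0) < \<delta>"
    using cl \<delta> unfolding closure_approachable by blast
  obtain s f where sf: "segsol (infl F ebar) 0 s f" "f 0 \<in> Xo" "f s = z"
    using z(1) K_char by blast
  have s0: "0 \<le> s" using segsolD(1)[OF sf(1)] .
  have "ball (\<phi> t1) \<delta> \<subseteq> Kset F ebar Xo"
  proof
    fix y assume "y \<in> ball (\<phi> t1) \<delta>"
    then have dy: "dist y (\<phi> t1) < \<delta>" by (simp add: dist_commute)
    obtain p where p: "segsol (infl F ebar) t0 t1 p" "p t0 = z" "p t1 = y" using H[OF z(2) dy] by blast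
    define c where "c = s - t0"
    define q where "q t = p (t - c)" for t
    have sq: "segsol (infl F ebar) (t0 + c) (t1 + c) q" unfolding q_def by (rule segsol_shift[OF p(1)])
    have e0: "t0 + c = s" unfolding c_def by simp
    have sq': "segsol (infl F ebar) s (t1 + c) q" using sq unfolding e0 .
    define g where "g t = (if t \<le> s then f t else q t)" for t
    have g1: "segsol (infl F ebar) 0 s g"
      by (rule segsol_cong[OF sf(1)]) (simp add: g_def)
    have g2: "segsol (infl F ebar) s (t1 + c) g"
    proof (rule segsol_cong[OF sq'])
      fix t assume t: "t \<in> {s..t1 + c}"
      show "q t = g t"
      proof (cases "t = s")
        case True
        have "q s = p t0" unfolding q_def c_def by simp
        then show ?thesis using True p(2) sf(3) unfolding g_def by simp
      next
        case False
        then have "\<not> t \<le> s" using t by auto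
        then show ?thesis unfolding g_def by simp
      qed
    qed
    have gs: "segsol (infl F ebar) 0 (t1 + c) g" by (rule segsol_glue[OF g1 g2])
    have g0: "g 0 \<in> Xo" using s0 sf(2) unfolding g_def by simp
    have "t1 + c > s" using tt unfolding c_def by simp
    then have "g (t1 + c) = q (t1 + c)" unfolding g_def by simp
    also have "\<dots> = y" unfolding q_def using p(3) by simp
    finally show "y \<in> Kset F ebar Xo" using gs g0 K_char by blast
  qed
  then show ?thesis using \<delta> mem_interior by blast
qed


theorem lemma7:
  fixes F :: "'a::euclidean_space \<Rightarrow> 'a set"
    and Xo :: "'a set"
    and ebar :: "'a \<Rightarrow> real"
  assumes F_cont: "sv_continuous F"
    and F_ne: "\<And>x. F x \<noteq> {}"
    and F_compact: "\<And>x. compact (F x)"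
    and F_convex: "\<And>x. convex (F x)"
    and fc: "forward_complete F"
    and ebar_cont: "continuous_on UNIV ebar"
    and ebar_pos: "\<And>x. ebar x > 0"
  shows "\<forall>eps :: 'a \<Rightarrow> real. continuous_on UNIV eps \<and> (\<forall>x. 0 \<le> eps x \<and> eps x < ebar x) \<longrightarrow>
     forward_contractive (infl F eps) (closure (Kset F ebar Xo)) \<and>
     forward_contractive (infl_neg F eps) (- interior (Kset F ebar Xo)) \<and>
     (\<forall>I \<phi>. is_sol (infl F eps) I \<phi> \<and> \<phi> 0 \<in> interior (Kset F ebar Xo) \<longrightarrow>
        (\<forall>t\<in>I. t > 0 \<longrightarrow> \<phi> t \<notin> frontier (Kset F ebar Xo))) \<and>
     (\<forall>I \<phi>. is_sol (infl F eps) I \<phi> \<and> \<phi> 0 \<in> - closure (Kset F ebar Xo) \<longrightarrow>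
        (\<forall>t\<in>I. t < 0 \<longrightarrow> \<phi> t \<notin> frontier (Kset F ebar Xo)))"
proof (intro allI impI)
  fix eps :: "'a \<Rightarrow> real"
  assume A: "continuous_on UNIV eps \<and> (\<forall>x. 0 \<le> eps x \<and> eps x < ebar x)"
  then have eps_cont: "continuous_on UNIV eps" and lt: "\<And>x. eps x < ebar x" by auto
  let ?K = "Kset F ebar Xo"
  have RI: "\<phi> t1 \<in> interior ?K"
    if "segsol (infl F eps) t0 t1 \<phi>" "t0 < t1" "\<phi> t0 \<in> closure ?K" for t0 t1 \<phi>
    by (rule reach_int[OF F_cont F_compact ebar_cont eps_cont lt that])
  have intcl: "interior ?K \<subseteq> closure ?K" using interior_subset closure_subset by blast
  have solRI: "\<phi> t \<in> interior ?K"
    if "is_sol (infl F eps) I \<phi>" "t \<in> I" "t > 0" "\<phi> 0 \<in> closure ?K" for I \<phi> t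
  proof -
    have "0 \<in> I" using that(1) unfolding is_sol_def by blast
    then have "segsol (infl F eps) 0 t \<phi>" using is_sol_segsol[OF that(1)] that(2,3) by simp
    then show ?thesis using RI that(3,4) by blast
  qed
  have solRIneg: "\<phi> 0 \<in> interior ?K"
    if "is_sol (infl F eps) I \<phi>" "t \<in> I" "t < 0" "\<phi> t \<in> closure ?K" for I \<phi> t
  proof -
    have "0 \<in> I" using that(1) unfolding is_sol_def by blast
    then have "segsol (infl F eps) t 0 \<phi>" using is_sol_segsol[OF that(1)] that(2,3) by simp
    then show ?thesis using RI that(3,4) by blast
  qed
  have revRI: "\<phi> 0 \<in> interior ?K"
    if "is_sol (infl_neg F eps) I \<phi>" "t \<in> I" "t > 0" "\<phi> t \<in> closure ?K" for I \<phi> t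
  proof -
    have "0 \<in> I" using that(1) unfolding is_sol_def by blast
    then have "segsol (infl_neg F eps) 0 t \<phi>" using is_sol_segsol[OF that(1)] that(2,3) by simp
    then have "segsol (infl F eps) (-t) (-0) (\<lambda>s. \<phi> (- s))" by (rule segsol_reflect)
    then have s: "segsol (infl F eps) (-t) 0 (\<lambda>s. \<phi> (- s))" by simp
    have "(\<lambda>s. \<phi> (- s)) (-t) \<in> closure ?K" using that(4) by simp
    moreover have "- t < 0" using that(3) by simp
    ultimately have "(\<lambda>s. \<phi> (- s)) 0 \<in> interior ?K" using RI[OF s] by blast
    then show ?thesis by simp
  qed
  have P1: "forward_contractive (infl F eps) (closure ?K)"
    unfolding forward_contractive_def forward_invariant_def
  proof (intro conjI allI impI ballI)
    show "closed (closure ?K)" by simp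
  next
    fix I \<phi> t assume H: "is_sol (infl F eps) I \<phi> \<and> \<phi> 0 \<in> closure ?K" and t: "t \<in> I" "0 \<le> t"
    show "\<phi> t \<in> closure ?K"
    proof (cases "t = 0")
      case True then show ?thesis using H by simp
    next
      case False
      then have "t > 0" using t by simp
      then show ?thesis using solRI[of I \<phi> t] H t intcl by blast
    qed
  next
    fix xo p assume xo: "xo \<in> frontier (closure ?K)" and p: "p \<in> Sols (infl F eps) xo"
    obtain I \<phi> where p': "p = (I, \<phi>)" by (cases p)
    have sol: "is_sol (infl F eps) I \<phi>" "\<phi> 0 = xo" using p unfolding p' Sols_def is_max_sol_def by auto
    have "xo \<in> closure ?K" using xo unfolding frontier_def by simp
    have "\<phi> t \<in> interior (closure ?K)" if "t \<in> I \<inter> {0<..1}" for t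
    proof -
      have "\<phi> t \<in> interior ?K" using solRI[of I \<phi> t] sol that \<open>xo \<in> closure ?K\<close> by auto
      moreover have "interior ?K \<subseteq> interior (closure ?K)" by (rule interior_mono[OF closure_subset])
      ultimately show ?thesis by blast
    qed
    then show "case p of (I, \<phi>) \<Rightarrow> \<exists>T>0. \<forall>t\<in>I \<inter> {0<..T}. \<phi> t \<in> interior (closure ?K)"
      unfolding p' by (intro case_prodI exI[of _ 1]) auto
  qed
  have P2: "forward_contractive (infl_neg F eps) (- interior ?K)"
    unfolding forward_contractive_def forward_invariant_def
  proof (intro conjI allI impI ballI)
    show "closed (- interior ?K)" by (simp add: closed_Compl)
  next
    fix I \<phi> t assume H: "is_sol (infl_neg F eps) I \<phi> \<and> \<phi> 0 \<in> - interior ?K" and t: "t \<in> I" "0 \<le> t"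
    show "\<phi> t \<in> - interior ?K"
    proof (cases "t = 0")
      case True then show ?thesis using H by simp
    next
      case False
      then have "t > 0" using t by simp
      show ?thesis
      proof
        assume "\<phi> t \<in> interior ?K"
        then have "\<phi> t \<in> closure ?K" using intcl by blast
        then have "\<phi> 0 \<in> interior ?K" using revRI[of I \<phi> t] H t \<open>t > 0\<close> by blast
        then show False using H by simp
      qed
    qed
  next
    fix xo p assume xo: "xo \<in> frontier (- interior ?K)" and p: "p \<in> Sols (infl_neg F eps) xo"
    obtain I \<phi> where p': "p = (I, \<phi>)" by (cases p)
    have sol: "is_sol (infl_neg F eps) I \<phi>" "\<phi> 0 = xo" using p unfolding p' Sols_def is_max_sol_def by auto
    have "xo \<in> frontier (interior ?K)" using xo by simp
    then have xo': "xo \<notin> interior ?K" unfolding frontier_def by simp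
    have "\<phi> t \<in> interior (- interior ?K)" if "t \<in> I \<inter> {0<..1}" for t
    proof -
      have "\<phi> t \<notin> closure (interior ?K)"
      proof
        assume "\<phi> t \<in> closure (interior ?K)"
        moreover have "closure (interior ?K) \<subseteq> closure ?K" by (rule closure_mono[OF interior_subset])
        ultimately have "\<phi> t \<in> closure ?K" by blast
        then have "\<phi> 0 \<in> interior ?K" using revRI[of I \<phi> t] sol that by auto
        then show False using xo' sol(2) by simp
      qed
      then show ?thesis unfolding interior_complement by simp
    qed
    then show "case p of (I, \<phi>) \<Rightarrow> \<exists>T>0. \<forall>t\<in>I \<inter> {0<..T}. \<phi> t \<in> interior (- interior ?K)"
      unfolding p' by (intro case_prodI exI[of _ 1]) auto
  qed
  have P3: "\<forall>I \<phi>. is_sol (infl F eps) I \<phi> \<and> \<phi> 0 \<in> interior ?K \<longrightarrow>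
        (\<forall>t\<in>I. t > 0 \<longrightarrow> \<phi> t \<notin> frontier ?K)"
  proof (intro allI impI ballI)
    fix I \<phi> t assume H: "is_sol (infl F eps) I \<phi> \<and> \<phi> 0 \<in> interior ?K" and t: "t \<in> I" "t > 0"
    then have "\<phi> 0 \<in> closure ?K" using intcl by blast
    then have "\<phi> t \<in> interior ?K" using solRI[of I \<phi> t] H t by blast
    then show "\<phi> t \<notin> frontier ?K" unfolding frontier_def by simp
  qed
  have P4: "\<forall>I \<phi>. is_sol (infl F eps) I \<phi> \<and> \<phi> 0 \<in> - closure ?K \<longrightarrow>
        (\<forall>t\<in>I. t < 0 \<longrightarrow> \<phi> t \<notin> frontier ?K)"
  proof (intro allI impI ballI notI)
    fix I \<phi> t assume H: "is_sol (infl F eps) I \<phi> \<and> \<phi> 0 \<in> - closure ?K" and t: "t \<in> I" "t < 0"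
      and fr: "\<phi> t \<in> frontier ?K"
    then have "\<phi> t \<in> closure ?K" unfolding frontier_def by simp
    then have "\<phi> 0 \<in> interior ?K" using solRIneg[of I \<phi> t] H t by blast
    then show False using H intcl by blast
  qed
  show "forward_contractive (infl F eps) (closure ?K) \<and>
     forward_contractive (infl_neg F eps) (- interior ?K) \<and>
     (\<forall>I \<phi>. is_sol (infl F eps) I \<phi> \<and> \<phi> 0 \<in> interior ?K \<longrightarrow>
        (\<forall>t\<in>I. t > 0 \<longrightarrow> \<phi> t \<notin> frontier ?K)) \<and>
     (\<forall>I \<phi>. is_sol (infl F eps) I \<phi> \<and> \<phi> 0 \<in> - closure ?K \<longrightarrow>
        (\<forall>t\<in>I. t < 0 \<longrightarrow> \<phi> t \<notin> frontier ?K))"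
    using P1 P2 P3 P4 by blast
qed

end
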